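(* Let $S_1=(-y+x^2-y^2)\frac{\partial}{\partial x}+x(1+2y)\frac{\partial}{\partial y}$, let $H_1(x,y)=\frac{x^2+y^2}{1+2y}$, and for $\epsilon\in\mathbb{R}$ let $$\Phi_{1,\epsilon}(x,y)=\left(\frac{-2\epsilon x^{2}+(1-\epsilon^{2})x-2\epsilon y^{2}-2\epsilon y}{D(x,y)},\ \frac{-2\epsilon^{2}x^{2}+2\epsilon x-2\epsilon^{2}y^{2}+(1-\epsilon^{2})y}{D(x,y)}\right),$$ $D(x,y)=4\epsilon^{2}x^{2}+4\epsilon^{2}y^{2}+4\epsilon^{2}y+\epsilon^{2}-4\epsilon x+1$, be the KHK map of $S_1$. Let $Y_1=x(1+2y)\frac{\partial}{\partial x}+(y-x^2+y^2)\frac{\partial}{\partial y}$ and let $\Psi_{1,\delta}$ be the KHK map of $Y_1$ with step $\delta$. Then: (a) $H_1$ is a first integral of $\Phi_{1,\epsilon}$; (b) $S_1$ is a Lie symmetry of $\Phi_{1,\epsilon}$; (c) $\Phi_{1,\epsilon}$ has an invariant measure with density $\nu=1/(1+2y)^2$; (d) for all $\epsilon,\delta\in\mathbb{R}$, $\Psi_{1,\delta}\circ\Phi_{1,\epsilon}=\Phi_{1,\epsilon}\circ\Psi_{1,\delta}$.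
   Context: The KHK map with step $\epsilon$ of a quadratic planar vector field $X$ is $\mathbf{x}\mapsto\mathbf{x}+2\epsilon\left(I-\epsilon\,\mathrm{D}X(\mathbf{x})\right)^{-1}X(\mathbf{x})$, where $\mathrm{D}X$ is the Jacobian matrix of $X$. A function $H$ is a first integral of a map $F$ if $H\circ F=H$. A vector field $X$ is a Lie symmetry of $F$ if $X(F(\mathbf{x}))=DF(\mathbf{x})\,X(\mathbf{x})$. *)

theory Defs
  imports "HOL-Analysis.Analysis"
begin

definition pt :: "real \<Rightarrow> real \<Rightarrow> real^2" where
  "pt a b = vector [a, b]"

definition jac :: "(real^2 \<Rightarrow> real^2) \<Rightarrow> real^2 \<Rightarrow> real^2^2" where
  "jac F p = matrix (frechet_derivative F (at p))"

definition khk :: "(real^2 \<Rightarrow> real^2) \<Rightarrow> real \<Rightarrow> real^2 \<Rightarrow> real^2" where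
  "khk X e p = p + (2 * e) *\<^sub>R (matrix_inv (mat 1 - e *\<^sub>R jac X p) *v X p)"

definition khk_defined :: "(real^2 \<Rightarrow> real^2) \<Rightarrow> real \<Rightarrow> real^2 \<Rightarrow> bool" where
  "khk_defined X e p \<longleftrightarrow> invertible (mat 1 - e *\<^sub>R jac X p)"

definition S1 :: "real^2 \<Rightarrow> real^2" where
  "S1 p = (let x = p$1; y = p$2 in pt (- y + x^2 - y^2) (x * (1 + 2*y)))"

definition Y1 :: "real^2 \<Rightarrow> real^2" where
  "Y1 p = (let x = p$1; y = p$2 in pt (x * (1 + 2*y)) (y - x^2 + y^2))"

definition H1 :: "real^2 \<Rightarrow> real" where
  "H1 p = (let x = p$1; y = p$2 in (x^2 + y^2) / (1 + 2*y))"

definition Dden :: "real \<Rightarrow> real^2 \<Rightarrow> real" where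
  "Dden e p = (let x = p$1; y = p$2 in
     4*e^2*x^2 + 4*e^2*y^2 + 4*e^2*y + e^2 - 4*e*x + 1)"

definition Phi1 :: "real \<Rightarrow> real^2 \<Rightarrow> real^2" where
  "Phi1 e p = (let x = p$1; y = p$2 in
     pt ((-2*e*x^2 + (1 - e^2)*x - 2*e*y^2 - 2*e*y) / Dden e p)
        ((-2*e^2*x^2 + 2*e*x - 2*e^2*y^2 + (1 - e^2)*y) / Dden e p))"

definition Psi1 :: "real \<Rightarrow> real^2 \<Rightarrow> real^2" where
  "Psi1 d = khk Y1 d"

definition nu1 :: "real^2 \<Rightarrow> real" where
  "nu1 p = 1 / (1 + 2 * p$2)^2"

definition first_integral_on :: "(real^2) set \<Rightarrow> (real^2 \<Rightarrow> real) \<Rightarrow> (real^2 \<Rightarrow> real^2) \<Rightarrow> bool" where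
  "first_integral_on U H F \<longleftrightarrow> (\<forall>p\<in>U. H (F p) = H p)"

definition lie_symmetry_on :: "(real^2) set \<Rightarrow> (real^2 \<Rightarrow> real^2) \<Rightarrow> (real^2 \<Rightarrow> real^2) \<Rightarrow> bool" where
  "lie_symmetry_on U X F \<longleftrightarrow>
     (\<forall>p\<in>U. F differentiable (at p) \<and> X (F p) = jac F p *v X p)"

text \<open>Invariant measure with density nu (Jacobian criterion):
  nu(F p) |det DF(p)| = nu(p).\<close>
definition invariant_density_on :: "(real^2) set \<Rightarrow> (real^2 \<Rightarrow> real) \<Rightarrow> (real^2 \<Rightarrow> real^2) \<Rightarrow> bool" where
  "invariant_density_on U \<nu> F \<longleftrightarrow>
     (\<forall>p\<in>U. F differentiable (at p) \<and> \<nu> (F p) * \<bar>det (jac F p)\<bar> = \<nu> p)"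

end

theory Submission
  imports Defs
begin


lemma pt_nth [simp]: "pt a b $ 1 = a" "pt a b $ 2 = b"
  by (simp_all add: pt_def)

lemma pt_eq_iff: "(v::real^2) = pt a b \<longleftrightarrow> v$1 = a \<and> v$2 = b"
  by (auto simp: vec_eq_iff forall_2)

lemma pt_axis: "pt a b = a *\<^sub>R axis 1 1 + b *\<^sub>R axis 2 (1::real)"
  by (simp add: vec_eq_iff forall_2 axis_def)

lemma has_derivative_pt:
  assumes "(f has_derivative f') F" "(g has_derivative g') F"
  shows "((\<lambda>q. pt (f q) (g q)) has_derivative (\<lambda>h. pt (f' h) (g' h))) F"
  unfolding pt_axis using assms by (auto intro!: derivative_eq_intros)

lemma has_derivative_nth [derivative_intros]:
  "((\<lambda>p::real^'n. p $ i) has_derivative (\<lambda>h. h $ i)) F"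
  by (rule bounded_linear_imp_has_derivative[OF bounded_linear_vec_nth])

definition mat2 :: "real \<Rightarrow> real \<Rightarrow> real \<Rightarrow> real \<Rightarrow> real^2^2" where
  "mat2 a b c d = vector [vector [a, b], vector [c, d]]"

lemma mat2_nth [simp]: "mat2 a b c d $ 1 $ 1 = a" "mat2 a b c d $ 1 $ 2 = b"
   "mat2 a b c d $ 2 $ 1 = c" "mat2 a b c d $ 2 $ 2 = d"
  by (simp_all add: mat2_def)

lemma mat2_mult: "mat2 a b c d *v v = pt (a * v$1 + b * v$2) (c * v$1 + d * v$2)"
  by (simp add: vec_eq_iff forall_2 matrix_vector_mult_def sum_2)

lemma det_mat2: "det (mat2 a b c d) = a * d - b * c"
  by (simp add: det_2)

lemma jac_eq:
  assumes "(F has_derivative (\<lambda>h. pt (a*h$1 + b*h$2) (c*h$1 + d*h$2))) (at p)"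
  shows "jac F p = mat2 a b c d"
proof -
  have e: "(\<lambda>h. pt (a*h$1 + b*h$2) (c*h$1 + d*h$2)) = (\<lambda>h. mat2 a b c d *v h)"
    by (simp add: mat2_mult)
  show ?thesis using frechet_derivative_at[OF assms] unfolding jac_def e
    by (metis matrix_of_matrix_vector_mul)
qed

lemma matrix_inv_solve:
  fixes A :: "real^2^2"
  assumes "invertible A"
  shows "A *v (matrix_inv A *v v) = v"
proof -
  have "A ** matrix_inv A = mat 1"
    using assms unfolding invertible_def matrix_inv_def by (rule someI2_ex) auto
  then show ?thesis by (simp add: matrix_vector_mul_assoc)
qed


lemma Phi1_alt: "Phi1 e = (\<lambda>p. pt
   ((-2*e*(p$1)^2 + (1 - e^2)*(p$1) - 2*e*(p$2)^2 - 2*e*(p$2)) / (4*e^2*(p$1)^2 + 4*e^2*(p$2)^2 + 4*e^2*(p$2) + e^2 - 4*e*(p$1) + 1))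
   ((-2*e^2*(p$1)^2 + 2*e*(p$1) - 2*e^2*(p$2)^2 + (1 - e^2)*(p$2)) / (4*e^2*(p$1)^2 + 4*e^2*(p$2)^2 + 4*e^2*(p$2) + e^2 - 4*e*(p$1) + 1)))"
  by (simp add: fun_eq_iff Phi1_def Dden_def Let_def)

lemma has_derivative_quot2:
  fixes N Q :: "real^2 \<Rightarrow> real"
  assumes "(N has_derivative (\<lambda>h. a*h$1 + b*h$2)) (at p)"
    "(Q has_derivative (\<lambda>h. c*h$1 + d*h$2)) (at p)" "Q p \<noteq> 0"
  shows "((\<lambda>q. N q / Q q) has_derivative
     (\<lambda>h. (a * Q p - N p * c) / (Q p)^2 * h$(1::2) + (b * Q p - N p * d) / (Q p)^2 * h$2)) (at p)"
  apply (rule has_derivative_divide[OF assms, THEN has_derivative_eq_rhs])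
  using assms(3) by (auto simp: fun_eq_iff field_simps power2_eq_square)

lemma dN1: "((\<lambda>p::real^2. -2*e*(p$1)^2 + (1 - e^2)*(p$1) - 2*e*(p$2)^2 - 2*e*(p$2)) has_derivative
   (\<lambda>h. (-4*e*p$1 + 1 - e^2) * h$1 + (-4*e*p$2 - 2*e) * h$2)) (at p)"
  by (auto intro!: derivative_eq_intros simp: fun_eq_iff algebra_simps)

lemma dN2: "((\<lambda>p::real^2. -2*e^2*(p$1)^2 + 2*e*(p$1) - 2*e^2*(p$2)^2 + (1 - e^2)*(p$2)) has_derivative
   (\<lambda>h. (-4*e^2*p$1 + 2*e) * h$1 + (-4*e^2*p$2 + 1 - e^2) * h$2)) (at p)"
  by (auto intro!: derivative_eq_intros simp: fun_eq_iff algebra_simps)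

lemma dD: "((\<lambda>p::real^2. 4*e^2*(p$1)^2 + 4*e^2*(p$2)^2 + 4*e^2*(p$2) + e^2 - 4*e*(p$1) + 1) has_derivative
   (\<lambda>h. (8*e^2*p$1 - 4*e) * h$1 + (8*e^2*p$2 + 4*e^2) * h$2)) (at p)"
  by (auto intro!: derivative_eq_intros simp: fun_eq_iff algebra_simps)

lemma jac_Phi1:
  fixes e :: real and p :: "real^2"
  assumes "Dden e p \<noteq> 0"
  shows "jac (Phi1 e) p = (let x = p$1; y = p$2;
     D = 4*e^2*x^2 + 4*e^2*y^2 + 4*e^2*y + e^2 - 4*e*x + 1;
     N1 = -2*e*x^2 + (1 - e^2)*x - 2*e*y^2 - 2*e*y;
     N2 = -2*e^2*x^2 + 2*e*x - 2*e^2*y^2 + (1 - e^2)*y in mat2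
     (((-4*e*x + 1 - e^2)*D - N1*(8*e^2*x - 4*e))/D^2) (((-4*e*y - 2*e)*D - N1*(8*e^2*y + 4*e^2))/D^2)
     (((-4*e^2*x + 2*e)*D - N2*(8*e^2*x - 4*e))/D^2) (((-4*e^2*y + 1 - e^2)*D - N2*(8*e^2*y + 4*e^2))/D^2))" (is ?A)
    and "Phi1 e differentiable (at p)" (is ?B)
proof -
  have D0: "4*e^2*(p$1)^2 + 4*e^2*(p$2)^2 + 4*e^2*(p$2) + e^2 - 4*e*(p$1) + 1 \<noteq> 0"
    using assms by (simp add: Dden_def Let_def)
  note d = has_derivative_pt[OF has_derivative_quot2[OF dN1[of e p] dD[of e p] D0] has_derivative_quot2[OF dN2[of e p] dD[of e p] D0], folded Phi1_alt]
  show ?A using jac_eq[OF d] by (simp add: Let_def)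
  show ?B using d by (rule differentiableI)
qed


definition Dr :: "real \<Rightarrow> real \<Rightarrow> real \<Rightarrow> real" where "Dr e x y = 4*e^2*x^2 + 4*e^2*y^2 + 4*e^2*y + e^2 - 4*e*x + 1"
definition N1r :: "real \<Rightarrow> real \<Rightarrow> real \<Rightarrow> real" where "N1r e x y = -2*e*x^2 + (1 - e^2)*x - 2*e*y^2 - 2*e*y"
definition N2r :: "real \<Rightarrow> real \<Rightarrow> real \<Rightarrow> real" where "N2r e x y = -2*e^2*x^2 + 2*e*x - 2*e^2*y^2 + (1 - e^2)*y"
definition A11 :: "real \<Rightarrow> real \<Rightarrow> real \<Rightarrow> real" where "A11 e x y = ((-4*e*x + 1 - e^2)*Dr e x y - N1r e x y*(8*e^2*x - 4*e))"
definition A12 :: "real \<Rightarrow> real \<Rightarrow> real \<Rightarrow> real" where "A12 e x y = ((-4*e*y - 2*e)*Dr e x y - N1r e x y*(8*e^2*y + 4*e^2))"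
definition A21 :: "real \<Rightarrow> real \<Rightarrow> real \<Rightarrow> real" where "A21 e x y = ((-4*e^2*x + 2*e)*Dr e x y - N2r e x y*(8*e^2*x - 4*e))"
definition A22 :: "real \<Rightarrow> real \<Rightarrow> real \<Rightarrow> real" where "A22 e x y = ((-4*e^2*y + 1 - e^2)*Dr e x y - N2r e x y*(8*e^2*y + 4*e^2))"

lemma p1: "2 * N2r e x y + Dr e x y = (1+e^2)*(1+2*y)"
  unfolding N2r_def Dr_def by algebra
lemma p2: "(N1r e x y)^2 + (N2r e x y)^2 = (1+e^2)*(x^2+y^2)*Dr e x y"
  unfolding N1r_def N2r_def Dr_def by algebra
lemma p3: "A11 e x y * A22 e x y - A12 e x y * A21 e x y = (1+e^2)^2 * (Dr e x y)^2"
  unfolding A11_def A12_def A21_def A22_def N1r_def N2r_def Dr_def by algebra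
lemma p4: "(- N2r e x y * Dr e x y + (N1r e x y)^2 - (N2r e x y)^2) =
   A11 e x y * (-y + x^2 - y^2) + A12 e x y * (x*(1+2*y))"
  unfolding A11_def A12_def A21_def A22_def N1r_def N2r_def Dr_def by algebra
lemma p5: "N1r e x y * (Dr e x y + 2 * N2r e x y) =
   A21 e x y * (-y + x^2 - y^2) + A22 e x y * (x*(1+2*y))"
  unfolding A11_def A12_def A21_def A22_def N1r_def N2r_def Dr_def by algebra

definition Erh :: "real \<Rightarrow> real \<Rightarrow> real \<Rightarrow> real \<Rightarrow> real" where "Erh d q1 q2 q3 = (q3 - d*(q3 + 2*q2))^2 + 4*d^2*q1^2"
definition Pr1h :: "real \<Rightarrow> real \<Rightarrow> real \<Rightarrow> real \<Rightarrow> real" where "Pr1h d q1 q2 q3 = q1*Erh d q1 q2 q3  +  2*d*((q3 - d*(q3 + 2*q2))*(q1*(q3 + 2*q2))  +  2*d*q1*(q2*q3 - q1^2 + q2^2))"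
definition Pr2h :: "real \<Rightarrow> real \<Rightarrow> real \<Rightarrow> real \<Rightarrow> real" where "Pr2h d q1 q2 q3 = q2*Erh d q1 q2 q3  +  2*d*( - 2*d*q1*(q1*(q3 + 2*q2))  +  (q3 - d*(q3 + 2*q2))*(q2*q3 - q1^2 + q2^2))"
definition N1h :: "real \<Rightarrow> real \<Rightarrow> real \<Rightarrow> real \<Rightarrow> real" where "N1h e q1 q2 q3 =  - 2*e*q1^2 + (1 - e^2)*q1*q3 - 2*e*q2^2 - 2*e*q2*q3"
definition N2h :: "real \<Rightarrow> real \<Rightarrow> real \<Rightarrow> real \<Rightarrow> real" where "N2h e q1 q2 q3 =  - 2*e^2*q1^2 + 2*e*q1*q3 - 2*e^2*q2^2 + (1 - e^2)*q2*q3"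
definition Drh :: "real \<Rightarrow> real \<Rightarrow> real \<Rightarrow> real \<Rightarrow> real" where "Drh e q1 q2 q3 = 4*e^2*q1^2 + 4*e^2*q2^2 + 4*e^2*q2*q3 + e^2*q3^2 - 4*e*q1*q3 + q3^2"

lemma I1: "Drh e x y 1 * Drh e (Pr1h d x y 1) (Pr2h d x y 1) (Erh d x y 1) =
   Erh d x y 1 * Erh d (N1h e x y 1) (N2h e x y 1) (Drh e x y 1)"
  unfolding Erh_def Pr1h_def Pr2h_def N1h_def N2h_def Drh_def apply (simp only: power_one mult_1_right mult_1_left) by algebra
lemma I2a: "Pr1h d (N1h e x y 1) (N2h e x y 1) (Drh e x y 1) * Erh d x y 1 =
   N1h e (Pr1h d x y 1) (Pr2h d x y 1) (Erh d x y 1) * (Drh e x y 1)^2"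
  unfolding Erh_def Pr1h_def Pr2h_def N1h_def N2h_def Drh_def apply (simp only: power_one mult_1_right mult_1_left) by algebra
lemma I2b: "Pr2h d (N1h e x y 1) (N2h e x y 1) (Drh e x y 1) * Erh d x y 1 =
   N2h e (Pr1h d x y 1) (Pr2h d x y 1) (Erh d x y 1) * (Drh e x y 1)^2"
  unfolding Erh_def Pr1h_def Pr2h_def N1h_def N2h_def Drh_def apply (simp only: power_one mult_1_right mult_1_left) by algebra

lemma Dden_r: "Dden e p = Dr e (p$1) (p$2)"
  by (simp add: Dden_def Dr_def Let_def)

lemma Phi1_r: "Phi1 e p = pt (N1r e (p$1) (p$2) / Dr e (p$1) (p$2)) (N2r e (p$1) (p$2) / Dr e (p$1) (p$2))"
  by (simp add: Phi1_def Dden_r Let_def N1r_def N2r_def)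

lemma jac_Phi1_r:
  assumes "Dden e p \<noteq> 0"
  shows "jac (Phi1 e) p = mat2 (A11 e (p$1) (p$2) / (Dr e (p$1) (p$2))^2) (A12 e (p$1) (p$2) / (Dr e (p$1) (p$2))^2)
     (A21 e (p$1) (p$2) / (Dr e (p$1) (p$2))^2) (A22 e (p$1) (p$2) / (Dr e (p$1) (p$2))^2)"
  using jac_Phi1(1)[OF assms] by (simp add: Let_def A11_def A12_def A21_def A22_def N1r_def N2r_def Dr_def)

lemma S1_pt: "S1 p = pt (-(p$2) + (p$1)^2 - (p$2)^2) (p$1 * (1 + 2*p$2))"
  by (simp add: S1_def Let_def)

lemma H1_pt: "H1 p = ((p$1)^2 + (p$2)^2) / (1 + 2*p$2)"
  by (simp add: H1_def Let_def)

lemma hlp1: fixes D c A B :: real shows "D \<noteq> 0 \<Longrightarrow> c \<noteq> 0 \<Longrightarrow> (c*A/D)/(c*B/D) = A/B"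
  by (metis mult.commute nonzero_mult_divide_mult_cancel_left divide_divide_times_eq)
lemma hlp2: fixes D c Y :: real shows "D \<noteq> 0 \<Longrightarrow> c \<noteq> 0 \<Longrightarrow> Y \<noteq> 0 \<Longrightarrow> 1/(c*Y/D)^2 * (c^2*D^2/D^4) = 1/Y^2"
  by (simp add: field_simps power2_eq_square power4_eq_xxxx)

lemma part_a:
  fixes e x y :: real
  assumes D: "Dr e x y \<noteq> 0" and y: "1 + 2*y \<noteq> 0"
  shows "((N1r e x y / Dr e x y)^2 + (N2r e x y / Dr e x y)^2) / (1 + 2 * (N2r e x y / Dr e x y))
     = (x^2 + y^2) / (1 + 2*y)"
proof -
  have ee: "1 + e^2 \<noteq> 0" using zero_le_power2[of e] by linarith
  have h1: "1 + 2 * (N2r e x y / Dr e x y) = (1+e^2)*(1+2*y) / Dr e x y"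
    using D p1[of e x y] by (simp add: field_simps)
  have h2: "(N1r e x y / Dr e x y)^2 + (N2r e x y / Dr e x y)^2 = (1+e^2)*(x^2+y^2) / Dr e x y"
    using D p2[of e x y] by (simp add: field_simps power2_eq_square)
  show ?thesis unfolding h1 h2 using hlp1[OF D ee] by simp
qed

lemma part_b1:
  fixes e x y :: real
  assumes D: "Dr e x y \<noteq> 0"
  shows "- (N2r e x y / Dr e x y) + (N1r e x y / Dr e x y)^2 - (N2r e x y / Dr e x y)^2 =
     A11 e x y / (Dr e x y)^2 * (-y + x^2 - y^2) + A12 e x y / (Dr e x y)^2 * (x*(1+2*y))"
proof -
  have "- (N2r e x y / Dr e x y) + (N1r e x y / Dr e x y)^2 - (N2r e x y / Dr e x y)^2
     = (- N2r e x y * Dr e x y + (N1r e x y)^2 - (N2r e x y)^2) / (Dr e x y)^2"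
    using D by (simp add: field_simps power2_eq_square)
  also have "\<dots> = (A11 e x y * (-y + x^2 - y^2) + A12 e x y * (x*(1+2*y))) / (Dr e x y)^2"
    by (simp only: p4)
  finally show ?thesis by (simp add: add_divide_distrib)
qed

lemma part_b2:
  fixes e x y :: real
  assumes D: "Dr e x y \<noteq> 0"
  shows "N1r e x y / Dr e x y * (1 + 2 * (N2r e x y / Dr e x y)) =
     A21 e x y / (Dr e x y)^2 * (-y + x^2 - y^2) + A22 e x y / (Dr e x y)^2 * (x*(1+2*y))"
proof -
  have "N1r e x y / Dr e x y * (1 + 2 * (N2r e x y / Dr e x y))
     = (N1r e x y * (Dr e x y + 2 * N2r e x y)) / (Dr e x y)^2"
    using D by (simp add: field_simps power2_eq_square)
  also have "\<dots> = (A21 e x y * (-y + x^2 - y^2) + A22 e x y * (x*(1+2*y))) / (Dr e x y)^2"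
    by (simp only: p5)
  finally show ?thesis by (simp add: add_divide_distrib)
qed

lemma part_c:
  fixes e x y :: real
  assumes D: "Dr e x y \<noteq> 0" and y: "1 + 2*y \<noteq> 0"
  shows "1 / (1 + 2 * (N2r e x y / Dr e x y))^2 *
     \<bar>A11 e x y / (Dr e x y)^2 * (A22 e x y / (Dr e x y)^2) - A12 e x y / (Dr e x y)^2 * (A21 e x y / (Dr e x y)^2)\<bar>
     = 1 / (1 + 2*y)^2"
proof -
  have ee: "1 + e^2 \<noteq> 0" using zero_le_power2[of e] by linarith
  have h1: "1 + 2 * (N2r e x y / Dr e x y) = (1+e^2)*(1+2*y) / Dr e x y"
    using D p1[of e x y] by (simp add: field_simps)
  have h2: "A11 e x y / (Dr e x y)^2 * (A22 e x y / (Dr e x y)^2) - A12 e x y / (Dr e x y)^2 * (A21 e x y / (Dr e x y)^2)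
     = (A11 e x y * A22 e x y - A12 e x y * A21 e x y) / (Dr e x y)^4"
    using D by (simp add: field_simps)
  have h3: "\<bar>(1+e^2)^2 * (Dr e x y)^2 / (Dr e x y)^4\<bar> = (1+e^2)^2 * (Dr e x y)^2 / (Dr e x y)^4"
    by simp
  show ?thesis unfolding h1 h2 p3 h3 using hlp2[OF D ee y] by simp
qed

lemma Y1_alt: "Y1 = (\<lambda>q. pt (q$1 * (1 + 2*q$2)) (q$2 - (q$1)^2 + (q$2)^2))"
  by (simp add: fun_eq_iff Y1_def Let_def)

lemma jac_Y1: "jac Y1 q = mat2 (1 + 2*q$2) (2*q$1) (-2*q$1) (1 + 2*q$2)"
proof -
  have d1: "((\<lambda>q::real^2. q$1 * (1 + 2*q$2)) has_derivative (\<lambda>h. (1 + 2*q$2) * h$1 + (2*q$1) * h$2)) (at q)"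
    by (auto intro!: derivative_eq_intros simp: fun_eq_iff algebra_simps)
  have d2: "((\<lambda>q::real^2. q$2 - (q$1)^2 + (q$2)^2) has_derivative (\<lambda>h. (-2*q$1) * h$1 + (1 + 2*q$2) * h$2)) (at q)"
    by (auto intro!: derivative_eq_intros simp: fun_eq_iff algebra_simps)
  show ?thesis using jac_eq[OF has_derivative_pt[OF d1 d2, folded Y1_alt]] .
qed

lemma mat1_minus: "mat 1 - d *\<^sub>R mat2 a b c g = mat2 (1 - d*a) (- d*b) (- d*c) (1 - d*g)"
  by (simp add: vec_eq_iff forall_2 mat_def mat2_def)

lemma Psi1_r:
  assumes "khk_defined Y1 d q"
  shows "Psi1 d q = pt (Pr1h d (q$1) (q$2) 1 / Erh d (q$1) (q$2) 1) (Pr2h d (q$1) (q$2) 1 / Erh d (q$1) (q$2) 1)"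
    and "Erh d (q$1) (q$2) 1 \<noteq> 0"
proof -
  define x y where "x = q$1" and "y = q$2"
  define a b where "a = 1 - d*(1+2*y)" and "b = -2*d*x"
  have A: "mat 1 - d *\<^sub>R jac Y1 q = mat2 a b (-b) a"
    unfolding jac_Y1 mat1_minus a_def b_def x_def y_def by (simp add: algebra_simps)
  have inv: "invertible (mat2 a b (-b) a)" using assms A by (simp add: khk_defined_def)
  have E: "Erh d x y 1 = a^2 + b^2" by (simp add: Erh_def a_def b_def power_mult_distrib)
  have "det (mat2 a b (-b) a) \<noteq> 0" using inv by (simp add: invertible_det_nz)
  then have E0: "Erh d x y 1 \<noteq> 0" unfolding E det_mat2 by (simp add: power2_eq_square)
  then show "Erh d (q$1) (q$2) 1 \<noteq> 0" by (simp add: x_def y_def)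
  define w1 w2 where "w1 = x * (1 + 2*y)" and "w2 = y - x^2 + y^2"
  have Yq: "Y1 q = pt w1 w2" by (simp add: Y1_def Let_def w1_def w2_def x_def y_def)
  define u where "u = matrix_inv (mat2 a b (-b) a) *v pt w1 w2"
  have "mat2 a b (-b) a *v u = pt w1 w2" unfolding u_def by (rule matrix_inv_solve[OF inv])
  then have h1: "a * u$1 + b * u$2 = w1" and h2: "-b * u$1 + a * u$2 = w2"
    by (simp_all add: mat2_mult pt_eq_iff)
  have "u$1 * Erh d x y 1 = a*(a * u$1 + b * u$2) - b*(-b * u$1 + a * u$2)"
    unfolding E by (simp add: algebra_simps power2_eq_square)
  then have u1: "u$1 * Erh d x y 1 = a*w1 - b*w2" unfolding h1 h2 .
  have "u$2 * Erh d x y 1 = b*(a * u$1 + b * u$2) + a*(-b * u$1 + a * u$2)"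
    unfolding E by (simp add: algebra_simps power2_eq_square)
  then have u2: "u$2 * Erh d x y 1 = b*w1 + a*w2" unfolding h1 h2 .
  have P1: "Pr1h d x y 1 = x * Erh d x y 1 + 2*d*(a*w1 - b*w2)"
    by (simp add: Pr1h_def a_def b_def w1_def w2_def algebra_simps)
  have P2: "Pr2h d x y 1 = y * Erh d x y 1 + 2*d*(b*w1 + a*w2)"
    by (simp add: Pr2h_def a_def b_def w1_def w2_def algebra_simps)
  have "Psi1 d q = q + (2*d) *\<^sub>R u"
    unfolding Psi1_def khk_def A Yq u_def ..
  also have "\<dots> = pt (Pr1h d x y 1 / Erh d x y 1) (Pr2h d x y 1 / Erh d x y 1)"
    unfolding pt_eq_iff P1 P2 using E0 u1[symmetric] u2[symmetric]
    by (simp add: x_def y_def field_simps)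
  finally show "Psi1 d q = pt (Pr1h d (q$1) (q$2) 1 / Erh d (q$1) (q$2) 1) (Pr2h d (q$1) (q$2) 1 / Erh d (q$1) (q$2) 1)"
    by (simp add: x_def y_def)
qed

lemma hom3: "w \<noteq> 0 \<Longrightarrow> Pr1h d (u/w) (v/w) 1 = Pr1h d u v w / w^3"
  "w \<noteq> 0 \<Longrightarrow> Pr2h d (u/w) (v/w) 1 = Pr2h d u v w / w^3"
  "w \<noteq> 0 \<Longrightarrow> Erh d (u/w) (v/w) 1 = Erh d u v w / w^2"
  "w \<noteq> 0 \<Longrightarrow> N1h e (u/w) (v/w) 1 = N1h e u v w / w^2"
  "w \<noteq> 0 \<Longrightarrow> N2h e (u/w) (v/w) 1 = N2h e u v w / w^2"
  "w \<noteq> 0 \<Longrightarrow> Drh e (u/w) (v/w) 1 = Drh e u v w / w^2"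
  by (simp_all add: Pr1h_def Pr2h_def Erh_def N1h_def N2h_def Drh_def field_simps; algebra)+

lemma final_cancel:
  fixes D E EE R Q N :: real
  assumes "D*R = E*EE" "Q*E = N*D^2" "D \<noteq> 0" "E \<noteq> 0" "EE \<noteq> 0" "R \<noteq> 0"
  shows "(Q/D^3)/(EE/D^2) = (N/E^2)/(R/E^2)"
proof -
  have "Q*R*(D*E) = N*D*EE*(D*E)"
  proof -
    have "Q*R*(D*E) = (Q*E)*(D*R)" by algebra
    also have "\<dots> = N*D*EE*(D*E)" unfolding assms(1,2) by algebra
    finally show ?thesis .
  qed
  then have "Q*R = N*D*EE" using assms(3,4) by simp
  then show ?thesis using assms(3-6) by (simp add: field_simps power2_eq_square power3_eq_cube)
qed

lemma bridge: "N1h e x y 1 = N1r e x y" "N2h e x y 1 = N2r e x y" "Drh e x y 1 = Dr e x y"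
  by (simp_all add: N1h_def N1r_def N2h_def N2r_def Drh_def Dr_def)

theorem proposition8:
  shows "(\<forall>e::real. first_integral_on
            {p. Dden e p \<noteq> 0 \<and> 1 + 2 * p$2 \<noteq> 0 \<and> 1 + 2 * (Phi1 e p)$2 \<noteq> 0}
            H1 (Phi1 e))
       \<and> (\<forall>e::real. lie_symmetry_on {p. Dden e p \<noteq> 0} S1 (Phi1 e))
       \<and> (\<forall>e::real. invariant_density_on
            {p. Dden e p \<noteq> 0 \<and> 1 + 2 * p$2 \<noteq> 0 \<and> 1 + 2 * (Phi1 e p)$2 \<noteq> 0}
            nu1 (Phi1 e))
       \<and> (\<forall>e d :: real. \<forall>p.
            Dden e p \<noteq> 0 \<and> khk_defined Y1 d p \<and>
            khk_defined Y1 d (Phi1 e p) \<and> Dden e (Psi1 d p) \<noteq> 0 \<longrightarrow>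
            Psi1 d (Phi1 e p) = Phi1 e (Psi1 d p))"
proof (intro conjI allI impI)
  fix e :: real
  show "first_integral_on {p. Dden e p \<noteq> 0 \<and> 1 + 2 * p$2 \<noteq> 0 \<and> 1 + 2 * (Phi1 e p)$2 \<noteq> 0} H1 (Phi1 e)"
    unfolding first_integral_on_def
  proof
    fix p assume "p \<in> {p. Dden e p \<noteq> 0 \<and> 1 + 2 * p$2 \<noteq> 0 \<and> 1 + 2 * (Phi1 e p)$2 \<noteq> 0}"
    then have D: "Dr e (p$1) (p$2) \<noteq> 0" and y: "1 + 2 * p$2 \<noteq> 0" by (auto simp: Dden_r)
    show "H1 (Phi1 e p) = H1 p"
      unfolding Phi1_r H1_pt pt_nth by (rule part_a[OF D y])
  qed
next
  fix e :: real
  show "lie_symmetry_on {p. Dden e p \<noteq> 0} S1 (Phi1 e)"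
    unfolding lie_symmetry_on_def
  proof
    fix p assume "p \<in> {p. Dden e p \<noteq> 0}"
    then have D0: "Dden e p \<noteq> 0" by simp
    then have D: "Dr e (p$1) (p$2) \<noteq> 0" by (simp add: Dden_r)
    show "Phi1 e differentiable at p \<and> S1 (Phi1 e p) = jac (Phi1 e) p *v S1 p"
    proof
      show "Phi1 e differentiable at p" by (rule jac_Phi1(2)[OF D0])
      show "S1 (Phi1 e p) = jac (Phi1 e) p *v S1 p"
        unfolding jac_Phi1_r[OF D0] mat2_mult Phi1_r S1_pt pt_nth pt_eq_iff
        using part_b1[OF D] part_b2[OF D] by simp
    qed
  qed
next
  fix e :: real
  show "invariant_density_on {p. Dden e p \<noteq> 0 \<and> 1 + 2 * p$2 \<noteq> 0 \<and> 1 + 2 * (Phi1 e p)$2 \<noteq> 0} nu1 (Phi1 e)"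
    unfolding invariant_density_on_def
  proof
    fix p assume "p \<in> {p. Dden e p \<noteq> 0 \<and> 1 + 2 * p$2 \<noteq> 0 \<and> 1 + 2 * (Phi1 e p)$2 \<noteq> 0}"
    then have D0: "Dden e p \<noteq> 0" and y: "1 + 2 * p$2 \<noteq> 0" by auto
    then have D: "Dr e (p$1) (p$2) \<noteq> 0" by (simp add: Dden_r)
    show "Phi1 e differentiable at p \<and> nu1 (Phi1 e p) * \<bar>det (jac (Phi1 e) p)\<bar> = nu1 p"
    proof
      show "Phi1 e differentiable at p" by (rule jac_Phi1(2)[OF D0])
      show "nu1 (Phi1 e p) * \<bar>det (jac (Phi1 e) p)\<bar> = nu1 p"
        unfolding jac_Phi1_r[OF D0] det_mat2 nu1_def Phi1_r pt_nth by (rule part_c[OF D y])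
    qed
  qed
next
  fix e d :: real and p :: "real^2"
  assume H: "Dden e p \<noteq> 0 \<and> khk_defined Y1 d p \<and> khk_defined Y1 d (Phi1 e p) \<and> Dden e (Psi1 d p) \<noteq> 0"
  define x y where "x = p$1" and "y = p$2"
  define N1 N2 D where "N1 = N1h e x y 1" and "N2 = N2h e x y 1" and "D = Drh e x y 1"
  define P1 P2 E where "P1 = Pr1h d x y 1" and "P2 = Pr2h d x y 1" and "E = Erh d x y 1"
  have D0: "D \<noteq> 0" using H by (simp add: D_def bridge Dden_r x_def y_def)
  have Phi: "Phi1 e p = pt (N1/D) (N2/D)"
    by (simp add: Phi1_r N1_def N2_def D_def bridge x_def y_def)
  have Psi: "Psi1 d p = pt (P1/E) (P2/E)" and E0: "E \<noteq> 0"
    using Psi1_r[of d p] H by (simp_all add: P1_def P2_def E_def x_def y_def)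
  have PsiPhi: "Psi1 d (Phi1 e p) = pt (Pr1h d N1 N2 D / D^3 / (Erh d N1 N2 D / D^2))
      (Pr2h d N1 N2 D / D^3 / (Erh d N1 N2 D / D^2))"
    and EE0': "Erh d (N1/D) (N2/D) 1 \<noteq> 0"
    using Psi1_r[of d "Phi1 e p"] H unfolding Phi by (simp_all add: hom3[OF D0])
  have EE0: "Erh d N1 N2 D \<noteq> 0" using EE0' by (simp add: hom3[OF D0])
  have R0': "Drh e (P1/E) (P2/E) 1 \<noteq> 0" using H unfolding Psi by (simp add: Dden_r bridge[symmetric])
  have R0: "Drh e P1 P2 E \<noteq> 0" using R0' by (simp add: hom3[OF E0])
  have PhiPsi: "Phi1 e (Psi1 d p) = pt (N1h e P1 P2 E / E^2 / (Drh e P1 P2 E / E^2))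
      (N2h e P1 P2 E / E^2 / (Drh e P1 P2 E / E^2))"
    unfolding Psi Phi1_r pt_nth bridge[symmetric] by (simp add: hom3[OF E0])
  have i1: "D * Drh e P1 P2 E = E * Erh d N1 N2 D"
    unfolding D_def P1_def P2_def E_def N1_def N2_def by (rule I1)
  have i2: "Pr1h d N1 N2 D * E = N1h e P1 P2 E * D^2"
    unfolding D_def P1_def P2_def E_def N1_def N2_def by (rule I2a)
  have i3: "Pr2h d N1 N2 D * E = N2h e P1 P2 E * D^2"
    unfolding D_def P1_def P2_def E_def N1_def N2_def by (rule I2b)
  show "Psi1 d (Phi1 e p) = Phi1 e (Psi1 d p)"
    unfolding PsiPhi PhiPsi pt_eq_iff pt_nth
    using final_cancel[OF i1 i2 D0 E0 EE0 R0] final_cancel[OF i1 i3 D0 E0 EE0 R0] by simp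
qed

end
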